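(* Let $a,b>0$, $0<c<1$, $0<p<1$, and consider, with the fear parameter $q>0$ as bifurcation parameter, $$\frac{dx}{dt}=x\left[\frac{(1-x)(x-p)}{1+qy}-ay\right],\qquad \frac{dy}{dt}=by\,(1-y-cx).$$ Let $$q_*=\frac{a^2c^2+2acp+2ac+p^2-4a-2p+1}{4a(c^2p-cp-c+1)},$$ and assume $q_*>0$ and $2A_1+A_2>0$ at $q=q_*$, where $A_1=ac^2q+1$, $A_2=-(2acq+ac+p+1)$. Let $E_{3*}=(x_3,1-cx_3)$ with $x_3=-A_2/(2A_1)$ evaluated at $q=q_*$. Then the system undergoes a saddle-node bifurcation at $E_{3*}$ at the threshold $q=q_{SN}=q_*$ (the transversality conditions of Sotomayor's theorem for a saddle-node bifurcation hold).
   Context: At $q=q_*$ the discriminant $\Delta=A_2^2-4A_1A_3$ (with $A_3=a+aq+p$) vanishes, so the two interior equilibria $E_{1*},E_{2*}$ coalesce into $E_{3*}$. *)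

theory Defs
  imports "HOL-Analysis.Analysis"
begin

definition fx :: "real \<Rightarrow> real \<Rightarrow> real \<Rightarrow> real \<Rightarrow> real \<Rightarrow> real" where
  "fx a p q x y = x * ((1 - x) * (x - p) / (1 + q * y) - a * y)"

definition fy :: "real \<Rightarrow> real \<Rightarrow> real \<Rightarrow> real \<Rightarrow> real" where
  "fy b c x y = b * y * (1 - y - c * x)"

definition qstar :: "real \<Rightarrow> real \<Rightarrow> real \<Rightarrow> real" where
  "qstar a c p = (a^2 * c^2 + 2*a*c*p + 2*a*c + p^2 - 4*a - 2*p + 1)
                 / (4 * a * (c^2 * p - c * p - c + 1))"

definition A1 :: "real \<Rightarrow> real \<Rightarrow> real \<Rightarrow> real" where
  "A1 a c q = a * c^2 * q + 1"

definition A2 :: "real \<Rightarrow> real \<Rightarrow> real \<Rightarrow> real \<Rightarrow> real" where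
  "A2 a c p q = - (2 * a * c * q + a * c + p + 1)"

definition pdx :: "(real \<Rightarrow> real \<Rightarrow> real) \<Rightarrow> real \<Rightarrow> real \<Rightarrow> real" where
  "pdx g x0 y0 = deriv (\<lambda>s. g s y0) x0"

definition pdy :: "(real \<Rightarrow> real \<Rightarrow> real) \<Rightarrow> real \<Rightarrow> real \<Rightarrow> real" where
  "pdy g x0 y0 = deriv (\<lambda>s. g x0 s) y0"

text \<open>Second derivative of g at (x0,y0) applied to (v,v): D^2 g(x0,y0)(v,v)
  = d^2/ds^2 g((x0,y0) + s v) at s = 0.\<close>
definition D2 :: "(real \<Rightarrow> real \<Rightarrow> real) \<Rightarrow> real \<Rightarrow> real \<Rightarrow> real \<Rightarrow> real \<Rightarrow> real" where
  "D2 g x0 y0 v1 v2 = deriv (deriv (\<lambda>s. g (x0 + s * v1) (y0 + s * v2))) 0"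

end

theory Submission
  imports Defs
begin
lemma alg:
  fixes a c p :: real
  assumes "a > 0" "0 < c" "c < 1" "0 < p" "p < 1"
  shows "(A2 a c p (qstar a c p))^2 = 4 * A1 a c (qstar a c p) * (a + a * qstar a c p + p)"
proof -
  define q where "q = qstar a c p"
  have d: "4 * a * (c^2 * p - c * p - c + 1) > 0"
  proof -
    have "c^2 * p - c * p - c + 1 = (1-c)*(1-c*p)" by (simp add: algebra_simps power2_eq_square)
    moreover have "(1-c)*(1-c*p) > 0" proof - have "c*p < 1*1" using assms by (intro mult_strict_mono) auto then show ?thesis using assms by simp qed
    ultimately show ?thesis using assms by simp
  qed
  have e: "4 * a * (c^2 * p - c * p - c + 1) * q = a^2 * c^2 + 2*a*c*p + 2*a*c + p^2 - 4*a - 2*p + 1"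
    unfolding q_def qstar_def using d by (simp add: field_simps)
  show ?thesis unfolding q_def[symmetric] A1_def A2_def using e
    by (simp add: algebra_simps power2_eq_square)
qed

lemma aux2:
  fixes A x d e :: real
  assumes "d \<noteq> 0"
  shows "((\<lambda>s. (- (A * s^2 + (x + s) * A * (2 * s)) * (d + e * s) - (- (x + s) * A * s^2) * e) / (d + e * s)^2)
          has_real_derivative (-2*x*A/d)) (at 0)"
  using assms by (auto intro!: derivative_eq_intros simp: field_simps power2_eq_square)

theorem theorem5p2:
  fixes a b c p :: real
  assumes "a > 0" and "b > 0" and "0 < c" and "c < 1" and "0 < p" and "p < 1"
    and "qstar a c p > 0"
    and "2 * A1 a c (qstar a c p) + A2 a c p (qstar a c p) > 0"
  defines "qs \<equiv> qstar a c p"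
    and "x3 \<equiv> - A2 a c p (qstar a c p) / (2 * A1 a c (qstar a c p))"
  defines "y3 \<equiv> 1 - c * x3"
  defines "J11 \<equiv> pdx (fx a p qs) x3 y3" and "J12 \<equiv> pdy (fx a p qs) x3 y3"
    and "J21 \<equiv> pdx (fy b c) x3 y3" and "J22 \<equiv> pdy (fy b c) x3 y3"
    and "Fq1 \<equiv> deriv (\<lambda>q. fx a p q x3 y3) qs"
    and "Fq2 \<equiv> deriv (\<lambda>q. fy b c x3 y3) qs"
  shows "fx a p qs x3 y3 = 0 \<and> fy b c x3 y3 = 0 \<and>
         J11 * J22 - J12 * J21 = 0 \<and>
         (\<exists>v1 v2 w1 w2. (v1, v2) \<noteq> (0, 0) \<and> (w1, w2) \<noteq> (0, 0) \<and>
            J11 * v1 + J12 * v2 = 0 \<and> J21 * v1 + J22 * v2 = 0 \<and>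
            w1 * J11 + w2 * J21 = 0 \<and> w1 * J12 + w2 * J22 = 0 \<and>
            w1 * Fq1 + w2 * Fq2 \<noteq> 0 \<and>
            w1 * D2 (fx a p qs) x3 y3 v1 v2 + w2 * D2 (fy b c) x3 y3 v1 v2 \<noteq> 0)"
proof -
  note pos = assms(1-6)
  define q where "q = qs"
  define A1v where "A1v = A1 a c q"
  define A2v where "A2v = A2 a c p q"
  define A3 where "A3 = a + a * q + p"
  have qpos: "q > 0" using assms(7) unfolding q_def qs_def .
  have A1pos: "A1v > 0" unfolding A1v_def A1_def using qpos pos by (simp add: add_pos_pos)
  have disc: "A2v^2 = 4 * A1v * A3"
    using alg[OF pos(1) pos(3) pos(4) pos(5) pos(6)] unfolding A1v_def A2v_def A3_def q_def qs_def .
  have x3': "x3 = - A2v / (2 * A1v)" unfolding x3_def A1v_def A2v_def q_def qs_def ..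
  have x3A: "2 * A1v * x3 = - A2v" unfolding x3' using A1pos by (simp add: field_simps)
  have x3A2: "A1v * x3^2 = A3"
  proof -
    have "4 * A1v * (A1v * x3^2) = (2 * A1v * x3)^2" by (simp add: power2_eq_square algebra_simps)
    also have "\<dots> = 4 * A1v * A3" using x3A disc by simp
    finally show ?thesis using A1pos by simp
  qed
  have A2neg: "A2v < 0"
  proof -
    have "a*c*q > 0" "a*c > 0" using qpos pos by auto
    then show ?thesis unfolding A2v_def A2_def using pos by linarith
  qed
  have x3pos: "x3 > 0" unfolding x3' using A2neg A1pos by (simp add: divide_neg_pos)
  have x3lt1: "x3 < 1"
  proof -
    have "2 * A1v + A2v > 0" using assms(8) unfolding A1v_def A2v_def q_def qs_def .
    then have "2 * A1v * x3 < 2 * A1v * 1" using x3A by simp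
    then show ?thesis using A1pos by simp
  qed
  have y3pos: "y3 > 0"
  proof -
    have "c * x3 < 1 * 1" using pos x3pos x3lt1 by (intro mult_strict_mono) auto
    then show ?thesis unfolding y3_def by simp
  qed
  define D0 where "D0 = 1 + q * y3"
  have D0pos: "D0 > 0" unfolding D0_def using qpos y3pos by (simp add: add_pos_pos)
  have key: "(1-x)*(x-p) - a*(1-c*x)*(1+q*(1-c*x)) = - A1v * (x - x3)^2" for x
  proof -
    have "A1v * (x - x3)^2 = A1v * x^2 - x * (2 * A1v * x3) + A1v * x3^2"
      by (simp add: power2_eq_square algebra_simps)
    also have "\<dots> = A1v * x^2 + A2v * x + A3" using x3A x3A2 by simp
    finally show ?thesis unfolding A1v_def A2v_def A3_def A1_def A2_def
      by (simp add: power2_eq_square algebra_simps)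
  qed
  have E: "(1-x3)*(x3-p) = a*y3*D0"
    using key[of x3] unfolding D0_def y3_def by (simp add: algebra_simps)
  have fx0: "fx a p qs x3 y3 = 0"
    unfolding fx_def q_def[symmetric] using E D0pos unfolding D0_def by simp
  have fy0: "fy b c x3 y3 = 0" unfolding fy_def y3_def by simp
  have dJ11: "((\<lambda>s. fx a p q s y3) has_real_derivative
      ((1-x3)*(x3-p)/D0 - a*y3) + x3*((-(x3-p) + (1-x3))/D0)) (at x3)"
    unfolding fx_def D0_def using D0pos unfolding D0_def
    by (auto intro!: derivative_eq_intros simp: field_simps)
  have J11v: "J11 = x3*(1 - 2*x3 + p)/D0"
    unfolding J11_def pdx_def q_def[symmetric] using DERIV_imp_deriv[OF dJ11] E D0pos
    by (simp add: field_simps)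
  have dJ12: "((\<lambda>s. fx a p q x3 s) has_real_derivative
      x3*(-((1-x3)*(x3-p))*q/D0^2 - a)) (at y3)"
    unfolding fx_def D0_def using D0pos unfolding D0_def
    by (auto intro!: derivative_eq_intros simp: field_simps power2_eq_square)
  have J12v: "J12 = x3*(-((1-x3)*(x3-p))*q/D0^2 - a)"
    unfolding J12_def pdy_def q_def[symmetric] using DERIV_imp_deriv[OF dJ12] .
  have dJ21: "((\<lambda>s. fy b c s y3) has_real_derivative b*y3*(-c)) (at x3)"
    unfolding fy_def by (auto intro!: derivative_eq_intros)
  have J21v: "J21 = -b*y3*c"
    unfolding J21_def pdx_def using DERIV_imp_deriv[OF dJ21] by simp
  have dJ22: "((\<lambda>s. fy b c x3 s) has_real_derivative b*(1-y3-c*x3) + b*y3*(-1)) (at y3)"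
    unfolding fy_def by (auto intro!: derivative_eq_intros simp: algebra_simps)
  have J22v: "J22 = -b*y3"
    unfolding J22_def pdy_def using DERIV_imp_deriv[OF dJ22] unfolding y3_def by simp
  have dFq1: "((\<lambda>r. fx a p r x3 y3) has_real_derivative x3*(-((1-x3)*(x3-p))*y3/D0^2)) (at q)"
    unfolding fx_def D0_def using D0pos unfolding D0_def
    by (auto intro!: derivative_eq_intros simp: field_simps power2_eq_square)
  have Fq1v: "Fq1 = x3*(-((1-x3)*(x3-p))*y3/D0^2)"
    unfolding Fq1_def q_def[symmetric] using DERIV_imp_deriv[OF dFq1] .
  have Fq2v: "Fq2 = 0" unfolding Fq2_def by simp
  have J1112: "J11 = c * J12"
  proof -
    have "c * J12 = - c * x3 * a * (q*y3 + D0) / D0"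
      unfolding J12v E using D0pos by (simp add: field_simps power2_eq_square)
    also have "\<dots> = x3*(1 - 2*x3 + p)/D0"
    proof -
      have "2*A1v*x3 = 2*x3 + 2*a*c^2*q*x3" unfolding A1v_def A1_def by (simp add: algebra_simps)
      then have "1 - 2*x3 + p = - c * a * (q*y3 + D0)"
        using x3A unfolding A2v_def A2_def D0_def y3_def by (simp add: algebra_simps power2_eq_square)
      then show ?thesis by simp
    qed
    finally show ?thesis unfolding J11v by simp
  qed
  have det: "J11 * J22 - J12 * J21 = 0" unfolding J1112 J22v J21v by (simp add: algebra_simps)
  have D2fy: "D2 (fy b c) x3 y3 1 (-c) = 0"
  proof -
    have "(\<lambda>s. fy b c (x3 + s * 1) (y3 + s * (-c))) = (\<lambda>s. 0)"
      unfolding fy_def y3_def by (rule ext) (simp add: algebra_simps)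
    then show ?thesis unfolding D2_def by simp
  qed
  define Dn where "Dn = (\<lambda>s::real. 1 + q * (y3 - c * s))"
  define h2 where "h2 = (\<lambda>s. - (x3 + s) * A1v * s^2 / Dn s)"
  define h2' where "h2' = (\<lambda>s. (- (A1v * s^2 + (x3 + s) * A1v * (2 * s)) * Dn s - (- (x3 + s) * A1v * s^2) * (- q * c)) / (Dn s)^2)"
  have evD: "eventually (\<lambda>s. Dn s > 0) (nhds 0)"
  proof -
    have "(Dn \<longlongrightarrow> Dn 0) (nhds 0)" unfolding Dn_def by (intro tendsto_intros filterlim_ident)
    moreover have "Dn 0 > 0" unfolding Dn_def using D0pos D0_def by simp
    ultimately show ?thesis by (rule order_tendstoD(1))
  qed
  have eq1: "eventually (\<lambda>s. fx a p qs (x3 + s * 1) (y3 + s * (-c)) = h2 s) (nhds 0)"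
    using evD
  proof (rule eventually_mono)
    fix s :: real assume Ds: "Dn s > 0"
    have k: "(1-(x3+s))*((x3+s)-p) - a*(1-c*(x3+s))*(1+q*(1-c*(x3+s))) = - A1v * s^2"
      using key[of "x3+s"] by simp
    have yy: "y3 + s * (-c) = 1 - c*(x3+s)" unfolding y3_def by (simp add: algebra_simps)
    have DD: "1 + q * (1 - c*(x3+s)) = Dn s" unfolding Dn_def y3_def by (simp add: algebra_simps)
    have "fx a p qs (x3 + s * 1) (y3 + s * (-c))
        = (x3+s)*((1-(x3+s))*((x3+s)-p)/Dn s - a*(1-c*(x3+s)))"
      unfolding fx_def yy q_def[symmetric] DD[symmetric] by simp
    also have "\<dots> = (x3+s)*(((1-(x3+s))*((x3+s)-p) - a*(1-c*(x3+s))*Dn s)/Dn s)"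
      using Ds by (simp add: diff_divide_distrib)
    also have "\<dots> = (x3+s)*(- A1v * s^2)/Dn s" using k unfolding DD by simp
    also have "\<dots> = h2 s" unfolding h2_def by (simp add: algebra_simps minus_divide_left)
    finally show "fx a p qs (x3 + s * 1) (y3 + s * (-c)) = h2 s" .
  qed
  have dh2: "(h2 has_real_derivative h2' s) (at s)" if "Dn s > 0" for s
    unfolding h2_def h2'_def using that unfolding Dn_def
    by (auto intro!: derivative_eq_intros simp: field_simps power2_eq_square)
  have eq2: "eventually (\<lambda>s. deriv h2 s = h2' s) (nhds 0)"
    using evD by (rule eventually_mono) (rule DERIV_imp_deriv[OF dh2])
  have dh2': "(h2' has_real_derivative (- 2 * x3 * A1v / D0)) (at 0)"
  proof -
    have "h2' = (\<lambda>s. (- (A1v * s^2 + (x3 + s) * A1v * (2 * s)) * (D0 + (-q*c) * s) - (- (x3 + s) * A1v * s^2) * (-q*c)) / (D0 + (-q*c) * s)^2)"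
      unfolding h2'_def Dn_def D0_def by (rule ext) (simp add: algebra_simps)
    then show ?thesis using aux2[of D0 A1v x3 "-q*c"] D0pos by simp
  qed
  have D2fx: "D2 (fx a p qs) x3 y3 1 (-c) = - 2 * x3 * A1v / D0"
  proof -
    have "D2 (fx a p qs) x3 y3 1 (-c) = (deriv ^^ 2) (\<lambda>s. fx a p qs (x3 + s * 1) (y3 + s * (-c))) 0"
      unfolding D2_def by (simp add: numeral_2_eq_2)
    also have "\<dots> = (deriv ^^ 2) h2 0" by (rule higher_deriv_cong_ev[OF eq1 refl])
    also have "\<dots> = deriv (deriv h2) 0" by (simp add: numeral_2_eq_2)
    also have "\<dots> = deriv h2' 0" by (rule deriv_cong_ev[OF eq2 refl])
    also have "\<dots> = - 2 * x3 * A1v / D0" by (rule DERIV_imp_deriv[OF dh2'])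
    finally show ?thesis .
  qed
  have J22nz: "J22 \<noteq> 0" unfolding J22v using pos y3pos by simp
  have Fq1nz: "Fq1 \<noteq> 0" unfolding Fq1v E using pos y3pos x3pos D0pos by simp
  have D2nz: "D2 (fx a p qs) x3 y3 1 (-c) \<noteq> 0" unfolding D2fx using x3pos A1pos D0pos by simp
  have ex: "\<exists>v1 v2 w1 w2. (v1, v2) \<noteq> (0, 0) \<and> (w1, w2) \<noteq> (0, 0) \<and>
            J11 * v1 + J12 * v2 = 0 \<and> J21 * v1 + J22 * v2 = 0 \<and>
            w1 * J11 + w2 * J21 = 0 \<and> w1 * J12 + w2 * J22 = 0 \<and>
            w1 * Fq1 + w2 * Fq2 \<noteq> 0 \<and>
            w1 * D2 (fx a p qs) x3 y3 v1 v2 + w2 * D2 (fy b c) x3 y3 v1 v2 \<noteq> 0"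
  proof (intro exI conjI)
    show "(1::real, -c) \<noteq> (0, 0)" by simp
    show "(J22, -J12) \<noteq> (0, 0)" using J22nz by simp
    show "J11 * 1 + J12 * (-c) = 0" unfolding J1112 by simp
    show "J21 * 1 + J22 * (-c) = 0" unfolding J21v J22v by simp
    show "J22 * J11 + (-J12) * J21 = 0" using det by (simp add: algebra_simps)
    show "J22 * J12 + (-J12) * J22 = 0" by simp
    show "J22 * Fq1 + (-J12) * Fq2 \<noteq> 0" unfolding Fq2v using J22nz Fq1nz by simp
    show "J22 * D2 (fx a p qs) x3 y3 1 (-c) + (-J12) * D2 (fy b c) x3 y3 1 (-c) \<noteq> 0"
      unfolding D2fy using J22nz D2nz by simp
  qed
  show ?thesis using fx0 fy0 det ex by blast
qed
end
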